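(* Let $(M,g)$ be a hyperkähler K3 surface with complex structures $I,J,K=IJ$ and Kähler forms $\omega_I,\omega_J,\omega_K$. Assume: - $Y=(M,J)$ is an elliptic K3 surface $\pi:Y\to\mathbb P^1$ with a section $\sigma_0$ and fibre class $f$; - the holomorphic two-form of $Y$ is $\sigma_J=\omega_K+i\omega_I$. Let $X=(M,I)$ with $\sigma_I=\omega_J+i\omega_K$. Let $U'\subset\Gamma=H^2(M,\mathbb Z)$ be the hyperbolic plane with basis $v=f$, $v^*=f+[\sigma_0]$, identified with $U$ via $v\mapsto w$, $v^*\mapsto w^*$, and let $\Gamma'=U'^\perp$, so $\Gamma=\Gamma'\oplus U'$. Put $\mathrm{vol}(f)=\langle\omega_J,f\rangle$. Then the $\tilde\xi$-mirror of $(X,\omega_I,B=0)$ is given by $$\tilde\xi(\gamma((P_{\sigma_I},\omega_I),0))=\gamma((P_{\sigma^\vee},\omega^\vee),B^\vee)$$ for some $B^\vee\in\Gamma_{\mathbb R}$, where $$\sigma^\vee=\frac{1}{\mathrm{vol}(f)}\Big(\tfrac{\omega_I^2}{2}f+[\sigma_0]+f+i\omega_I\Big),\qquad \omega^\vee=\frac{1}{\mathrm{vol}(f)}\mathrm{Im}(\sigma_I).$$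
   Context: For a hyperkähler metric, $\omega_\lambda=g(\lambda(\cdot),\cdot)$. The form $\langle\ ,\ \rangle$ on $\Gamma=H^2(M,\mathbb Z)$ is the intersection form, extended complex-bilinearly. $U$ is the hyperbolic plane with standard basis $(w,w^* )$ ($w^2={w^*}^2=0$, $\langle w,w^*\rangle=1$). $P_\sigma$ is the oriented plane spanned by $\mathrm{Re}\,\sigma,\mathrm{Im}\,\sigma$. $\gamma$ sends $((P,\omega),B)$ to $(H_1,H_2)$ with: - $H_1=\{x-\langle x,B\rangle w:x\in P\}$, oriented via $P$; - $H_2$ with ordered basis $\big(\tfrac12(\omega^2-B^2)w+w^*+B,\ \omega-\langle\omega,B\rangle w\big)$. $\xi\in \mathrm O(\Gamma\oplus U)$ is the identity on $\Gamma'$ and swaps $v\leftrightarrow w$, $v^*\leftrightarrow w^*$. $\iota(H_1,H_2)=(H_2,H_1)$, and $\tilde\xi=\iota\circ\xi$. *)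

theory Defs
  imports "HOL-Analysis.Analysis"
begin

text \<open>Real cohomology Gamma_R is modelled by a real vector space 'v with a symmetric
bilinear (intersection) form b.  (Gamma + U)_R is modelled as 'v \<times> real \<times> real,
where (x, s, t) stands for x + s w + t w*.\<close>

definition sym_bilinear :: "('v::real_vector \<Rightarrow> 'v \<Rightarrow> real) \<Rightarrow> bool" where
  "sym_bilinear b \<longleftrightarrow> (\<forall>x y. b x y = b y x) \<and> (\<forall>y. linear (\<lambda>x. b x y))"

text \<open>Oriented planes are represented by ordered bases; two ordered bases represent the
same oriented plane iff the first is linearly independent and the second is obtained from
it by a change of basis of positive determinant.\<close>

definition oplane_eq :: "('a::real_vector \<times> 'a) \<Rightarrow> ('a \<times> 'a) \<Rightarrow> bool" where
  "oplane_eq P Q \<longleftrightarrow>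
     (\<forall>s t. s *\<^sub>R fst P + t *\<^sub>R snd P = 0 \<longrightarrow> s = 0 \<and> t = 0) \<and>
     (\<exists>p q r s. fst Q = p *\<^sub>R fst P + q *\<^sub>R snd P \<and>
                snd Q = r *\<^sub>R fst P + s *\<^sub>R snd P \<and> p * s - q * r > 0)"

definition opair_eq where
  "opair_eq H K \<longleftrightarrow> oplane_eq (fst H) (fst K) \<and> oplane_eq (snd H) (snd K)"

text \<open>P_sigma: the oriented plane with ordered basis (Re sigma, Im sigma); a complex class
sigma in Gamma_C is given by the pair (Re sigma, Im sigma).\<close>
definition P_sigma :: "'v \<times> 'v \<Rightarrow> 'v \<times> 'v" where
  "P_sigma \<sigma> = (fst \<sigma>, snd \<sigma>)"

definition gamma :: "('v::real_vector \<Rightarrow> 'v \<Rightarrow> real) \<Rightarrow> 'v \<times> 'v \<Rightarrow> 'v \<Rightarrow> 'v \<Rightarrow>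
    (('v \<times> real \<times> real) \<times> ('v \<times> real \<times> real)) \<times> (('v \<times> real \<times> real) \<times> ('v \<times> real \<times> real))" where
  "gamma b P \<omega> B =
     (((fst P, - b (fst P) B, 0), (snd P, - b (snd P) B, 0)),
      ((B, (b \<omega> \<omega> - b B B) / 2, 1), (\<omega>, - b \<omega> B, 0)))"

text \<open>xi: the real-linear extension of the isometry of Gamma + U which is the identity on
Gamma' = U'^perp and swaps v \<leftrightarrow> w, v* \<leftrightarrow> w*.  For x in Gamma_R one has
x = x' + <x,v*> v + <x,v> v* with x' in Gamma'_R, since (v,v*) is a hyperbolic basis.\<close>
definition xi :: "('v::real_vector \<Rightarrow> 'v \<Rightarrow> real) \<Rightarrow> 'v \<Rightarrow> 'v \<Rightarrow> 'v \<times> real \<times> real \<Rightarrow> 'v \<times> real \<times> real" where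
  "xi b v vs y = (case y of (x, s, t) \<Rightarrow>
     (x - b x vs *\<^sub>R v - b x v *\<^sub>R vs + s *\<^sub>R v + t *\<^sub>R vs, b x vs, b x v))"

definition iota :: "'a \<times> 'a \<Rightarrow> 'a \<times> 'a" where
  "iota H = (snd H, fst H)"

definition xi_tilde where
  "xi_tilde b v vs H = iota ((xi b v vs (fst (fst H)), xi b v vs (snd (fst H))),
                             (xi b v vs (fst (snd H)), xi b v vs (snd (snd H))))"

end

theory Submission
  imports Defs
begin

lemma sb_facts:
  assumes "sym_bilinear b"
  shows "b (x + y) z = b x z + b y z" "b z (x + y) = b z x + b z y"
    "b (x - y) z = b x z - b y z" "b z (x - y) = b z x - b z y"
    "b (r *\<^sub>R x) z = r * b x z" "b z (r *\<^sub>R x) = r * b z x"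
    "b 0 z = 0" "b z 0 = 0"
proof -
  have sym: "\<And>x y. b x y = b y x" and lin: "\<And>y. linear (\<lambda>x. b x y)"
    using assms unfolding sym_bilinear_def by auto
  show 1: "b (x + y) z = b x z + b y z" using linear_add[OF lin] by simp
  show "b z (x + y) = b z x + b z y" using 1 sym by metis
  show 3: "b (x - y) z = b x z - b y z" using linear_diff[OF lin] by simp
  show "b z (x - y) = b z x - b z y" using 3 sym by metis
  show 5: "b (r *\<^sub>R x) z = r * b x z" using linear_scale[OF lin] by simp
  show "b z (r *\<^sub>R x) = r * b z x" using 5 sym by metis
  show 7: "b 0 z = 0" using linear_0[OF lin] by simp
  show "b z 0 = 0" using 7 sym by metis
qed

theorem mainTheorem19:
  fixes b :: "'v::real_vector \<Rightarrow> 'v \<Rightarrow> real"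
    and \<omega>I \<omega>J \<omega>K f \<sigma>0 :: 'v
  assumes form: "sym_bilinear b"
    and hk_pos: "b \<omega>I \<omega>I > 0"
    and hk_J: "b \<omega>J \<omega>J = b \<omega>I \<omega>I" and hk_K: "b \<omega>K \<omega>K = b \<omega>I \<omega>I"
    and hk_IJ: "b \<omega>I \<omega>J = 0" and hk_JK: "b \<omega>J \<omega>K = 0" and hk_IK: "b \<omega>I \<omega>K = 0"
    and ff: "b f f = 0" and fs: "b f \<sigma>0 = 1" and ss: "b \<sigma>0 \<sigma>0 = -2"
    and f11: "b f \<omega>K = 0" "b f \<omega>I = 0"
    and s11: "b \<sigma>0 \<omega>K = 0" "b \<sigma>0 \<omega>I = 0"
    and volpos: "b \<omega>J f > 0"
  shows
    "let vol = b \<omega>J f;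
         \<sigma>I = (\<omega>J, \<omega>K);
         \<sigma>v = ((1 / vol) *\<^sub>R ((b \<omega>I \<omega>I / 2) *\<^sub>R f + \<sigma>0 + f), (1 / vol) *\<^sub>R \<omega>I);
         \<omega>v = (1 / vol) *\<^sub>R snd \<sigma>I
     in \<exists>Bv :: 'v. opair_eq (xi_tilde b f (f + \<sigma>0) (gamma b (P_sigma \<sigma>I) \<omega>I 0))
                             (gamma b (P_sigma \<sigma>v) \<omega>v Bv)"
proof -
  have sym: "\<And>x y. b x y = b y x" using form unfolding sym_bilinear_def by auto
  note L = sb_facts[OF form]
  define a where "a = b \<omega>J f"
  define c where "c = b \<omega>J \<sigma>0"
  define q where "q = b \<omega>I \<omega>I / 2"
  define Z where "Z = \<omega>J - (2*a + c) *\<^sub>R f - a *\<^sub>R \<sigma>0"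
  define Y where "Y = (q + 1) *\<^sub>R f + \<sigma>0"
  have apos: "a > 0" using volpos a_def by simp
  have S: "b \<omega>J \<omega>I = 0" "b \<omega>K \<omega>J = 0" "b \<omega>K \<omega>I = 0" "b \<sigma>0 f = 1"
    "b \<omega>K f = 0" "b \<omega>I f = 0" "b \<omega>K \<sigma>0 = 0" "b \<omega>I \<sigma>0 = 0" "b f \<omega>J = a" "b \<sigma>0 \<omega>J = c"
    "b \<omega>J f = a" "b \<omega>J \<sigma>0 = c"
    using sym assms a_def c_def by metis+
  have I0: "\<omega>I \<noteq> 0" using hk_pos L(7) by auto
  have K0: "\<omega>K \<noteq> 0" using hk_pos hk_K L(7) by auto
  have xJ: "xi b f (f + \<sigma>0) (\<omega>J, 0, 0) = (Z, a + c, a)"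
    unfolding xi_def Z_def by (simp add: L S assms algebra_simps flip: scaleR_add_left)
  have xK: "xi b f (f + \<sigma>0) (\<omega>K, 0, 0) = (\<omega>K, 0, 0)"
    unfolding xi_def using L S assms by simp
  have xI: "xi b f (f + \<sigma>0) (\<omega>I, 0, 0) = (\<omega>I, 0, 0)"
    unfolding xi_def using L S assms by simp
  have x0: "xi b f (f + \<sigma>0) (0, q, 1) = (Y, 0, 0)"
    unfolding xi_def Y_def using L S assms by (simp add: algebra_simps)
  have LHS: "xi_tilde b f (f + \<sigma>0) (gamma b (P_sigma (\<omega>J, \<omega>K)) \<omega>I 0)
     = (((Y, 0, 0), (\<omega>I, 0, 0)), ((Z, a + c, a), (\<omega>K, 0, 0)))"
    unfolding xi_tilde_def gamma_def P_sigma_def iota_def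
    using xJ xK xI x0 L q_def by simp
  have bZ: "b Y Z = 0" "b \<omega>I Z = 0" "b \<omega>K Z = 0"
    unfolding Y_def Z_def by (simp_all add: L S assms algebra_simps q_def)
  have bZZ: "b Z Z = b \<omega>I \<omega>I - 2*a*a - 2*a*c"
    unfolding Z_def by (simp add: L S assms algebra_simps)
  have Yeq: "(b \<omega>I \<omega>I / 2) *\<^sub>R f + \<sigma>0 + f = Y"
    unfolding Y_def q_def by (simp add: algebra_simps)
  have bYf: "b Y f = 1" unfolding Y_def by (simp add: L S assms)
  have ind1: "\<forall>s t. s *\<^sub>R (Y, 0::real, 0::real) + t *\<^sub>R (\<omega>I, 0, 0) = 0 \<longrightarrow> s = 0 \<and> t = 0"
  proof (intro allI impI)
    fix s t assume h: "s *\<^sub>R (Y, 0::real, 0::real) + t *\<^sub>R (\<omega>I, 0, 0) = 0"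
    hence e: "s *\<^sub>R Y + t *\<^sub>R \<omega>I = 0" by (simp add: zero_prod_def)
    hence "b (s *\<^sub>R Y + t *\<^sub>R \<omega>I) f = 0" by (simp add: L)
    hence s0: "s = 0" using bYf by (simp add: L S)
    with e I0 show "s = 0 \<and> t = 0" by simp
  qed
  have ind2: "\<forall>s t. s *\<^sub>R (Z, a + c, a) + t *\<^sub>R (\<omega>K, 0::real, 0::real) = 0 \<longrightarrow> s = 0 \<and> t = 0"
  proof (intro allI impI)
    fix s t assume h: "s *\<^sub>R (Z, a + c, a) + t *\<^sub>R (\<omega>K, 0::real, 0::real) = 0"
    hence e: "s *\<^sub>R Z + t *\<^sub>R \<omega>K = 0" and e2: "s * a = 0" by (simp_all add: zero_prod_def)
    hence s0: "s = 0" using apos by simp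
    with e K0 show "s = 0 \<and> t = 0" by simp
  qed
  define Bv where "Bv = Z /\<^sub>R a"
  have bB: "b Y Bv = 0" "b \<omega>I Bv = 0" "b \<omega>K Bv = 0" "b Bv Bv = b Z Z / (a*a)"
    unfolding Bv_def using bZ by (simp_all add: L field_simps)
  have Q1: "(Bv, (b ((1/a) *\<^sub>R \<omega>K) ((1/a) *\<^sub>R \<omega>K) - b Bv Bv) / 2, 1::real)
     = (1/a) *\<^sub>R (Z, a + c, a) + 0 *\<^sub>R (\<omega>K, 0::real, 0::real)"
    using apos by (simp add: bB bZZ L hk_K Bv_def field_simps)
  have Q2: "((1/a) *\<^sub>R \<omega>K, - b ((1/a) *\<^sub>R \<omega>K) Bv, 0::real)
     = 0 *\<^sub>R (Z, a + c, a) + (1/a) *\<^sub>R (\<omega>K, 0::real, 0::real)"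
    by (simp add: bB L)
  have P1: "((1/a) *\<^sub>R Y, - b ((1/a) *\<^sub>R Y) Bv, 0::real)
     = (1/a) *\<^sub>R (Y, 0::real, 0::real) + 0 *\<^sub>R (\<omega>I, 0::real, 0::real)"
    by (simp add: bB L)
  have P2: "((1/a) *\<^sub>R \<omega>I, - b ((1/a) *\<^sub>R \<omega>I) Bv, 0::real)
     = 0 *\<^sub>R (Y, 0::real, 0::real) + (1/a) *\<^sub>R (\<omega>I, 0::real, 0::real)"
    by (simp add: bB L)
  have det: "(1/a) * (1/a) - 0 * 0 > 0" using apos by simp
  have "opair_eq (xi_tilde b f (f + \<sigma>0) (gamma b (P_sigma (\<omega>J, \<omega>K)) \<omega>I 0))
     (gamma b (P_sigma ((1 / a) *\<^sub>R ((b \<omega>I \<omega>I / 2) *\<^sub>R f + \<sigma>0 + f), (1 / a) *\<^sub>R \<omega>I))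
        ((1/a) *\<^sub>R \<omega>K) Bv)"
    unfolding LHS
    unfolding opair_eq_def oplane_eq_def gamma_def P_sigma_def Yeq fst_conv snd_conv
    using ind1 ind2 det Q1 Q2 P1 P2 by blast
  then show ?thesis unfolding Let_def a_def snd_conv by blast
qed

end
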